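(* Let $p\in[1,\infty]$, let $Y$ be a complex Banach space, let $(\mathcal G,+)$ be a countable discrete group and $\mathbf X=\ell^p(\mathcal G,Y)$, with $\mathcal P$ and $\mathcal L(\mathbf X,\mathcal P)$ as in the context. Let $(\Omega,\mathcal G,\alpha)$ be a dynamical system and $A:\Omega\to\mathcal L(\mathbf X,\mathcal P)$ a family of operators over it. Then $\sigma^{\mathrm{op}}(A(\omega))=\{A(\nu):\nu\in\Omega\}$ for all pseudoergodic $\omega\in\Omega$. In particular, $A(\omega)$ is self-similar for each pseudoergodic $\omega\in\Omega$.
   Context: $(\mathcal G,+)$ is written additively but need not be abelian. Choose subsets $\mathcal G_n\subseteq\mathcal G$ with $\emptyset\neq\mathcal G_n\neq\mathcal G$, such that for each $m$ there is $N_m$ with $\mathcal G_m\subseteq\mathcal G_n$ for $n\ge N_m$, and $\bigcup_n\mathcal G_n=\mathcal G$; $P_n$ is multiplication by $\mathbf 1_{\mathcal G_n}$, $\mathcal P=(P_n)$. $K\in\mathcal L(\mathbf X)$ is $\mathcal P$-compact if $\|K(I-P_n)\|\to0$ and $\|(I-P_n)K\|\to0$; $\mathcal K(\mathbf X,\mathcal P)$ is the set of these and $\mathcal L(\mathbf X,\mathcal P)=\{A\in\mathcal L(\mathbf X):AK,KA\in\mathcal K(\mathbf X,\mathcal P)\ \forall K\in\mathcal K(\mathbf X,\mathcal P)\}$. $(A_n)$ converges $\mathcal P$-strongly to $A$ ($\mathcal P\text{-}\lim A_n=A$) if $\|K(A_n-A)\|+\|(A_n-A)K\|\to0$ for all $K\in\mathcal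 K(\mathbf X,\mathcal P)$. $V_gx=(x_{h+g})_{h\in\mathcal G}$. $g_n\to\infty$ means $(g_n)$ eventually leaves every finite subset. For $B\in\mathcal L(\mathbf X,\mathcal P)$ and $g=(g_n)$ with $g_n\to\infty$, the limit operator is $B_g:=\mathcal P\text{-}\lim V_{g_n}BV_{-g_n}$ if it exists; $\sigma^{\mathrm{op}}(B)$ is the set of all limit operators of $B$; $B$ is self-similar if $B\in\sigma^{\mathrm{op}}(B)$. A dynamical system $(\Omega,\mathcal G,\alpha)$: $\Omega$ compact metric space, $\alpha$ maps $\mathcal G$ to homeomorphisms of $\Omega$ with $\alpha(g+h)=\alpha(g)\circ\alpha(h)$. $L(\omega)=\{\nu:\exists g_n\to\infty,\ \alpha(g_n)(\omega)\to\nu\}$; $\omega$ is pseudoergodic if $L(\omega)=\Omega$. A family of operators over $(\Omega,\mathcal G,\alpha)$ is $A:\Omega\to\mathcal L(\mathbf X,\mathcal P)$ with $A(\alpha(g)(\omega))=V_gA(\omega)V_{-g}$ for all $\omega,g$, and such that $\omega_n\to\omega$ implies $\mathcal P\text{-}\lim A(\omega_n)=A(\omega)$. *)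

theory Defs
  imports "HOL-Analysis.Analysis"
begin

text \<open>The distribution has no class of complex normed vector spaces, so we
introduce one: a real Banach space with a compatible complex scalar multiplication.\<close>

class complex_banach = banach +
  fixes scaleC :: "complex \<Rightarrow> 'a \<Rightarrow> 'a"
  assumes scaleC_of_real: "scaleC (complex_of_real r) x = scaleR r x"
    and scaleC_add_right: "scaleC a (x + y) = scaleC a x + scaleC a y"
    and scaleC_add_left: "scaleC (a + b) x = scaleC a x + scaleC b x"
    and scaleC_scaleC: "scaleC a (scaleC b x) = scaleC (a * b) x"
    and scaleC_one: "scaleC 1 x = x"
    and norm_scaleC: "norm (scaleC a x) = cmod a * norm x"

text \<open>Elements of X = l^p(G,Y) are functions G \<Rightarrow> Y; p ranges over [1,\<infinity>] (as ennreal).\<close>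

definition lp_space :: "ennreal \<Rightarrow> ('g \<Rightarrow> 'y::real_normed_vector) set" where
  "lp_space p = (if p = \<infinity> then {x. bounded (range (\<lambda>g. norm (x g)))}
                 else {x. (\<lambda>g. norm (x g) powr enn2real p) summable_on UNIV})"

definition lp_norm :: "ennreal \<Rightarrow> ('g \<Rightarrow> 'y::real_normed_vector) \<Rightarrow> real" where
  "lp_norm p x = (if p = \<infinity> then (SUP g. norm (x g))
                  else (infsum (\<lambda>g. norm (x g) powr enn2real p) UNIV) powr (1 / enn2real p))"

text \<open>Operators are represented by functions on 'g \<Rightarrow> 'y; the canonical representative
of an operator on X maps every element outside X to 0, so that HOL equality of
operators is equality as operators on X.\<close>

definition bounded_op :: "ennreal \<Rightarrow> (('g \<Rightarrow> 'y::complex_banach) \<Rightarrow> ('g \<Rightarrow> 'y)) \<Rightarrow> bool" where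
  "bounded_op p T \<longleftrightarrow>
     (\<forall>x\<in>lp_space p. T x \<in> lp_space p) \<and>
     (\<forall>x. x \<notin> lp_space p \<longrightarrow> T x = (\<lambda>_. 0)) \<and>
     (\<forall>x\<in>lp_space p. \<forall>y\<in>lp_space p. T (\<lambda>h. x h + y h) = (\<lambda>h. T x h + T y h)) \<and>
     (\<forall>x\<in>lp_space p. \<forall>c. T (\<lambda>h. scaleC c (x h)) = (\<lambda>h. scaleC c (T x h))) \<and>
     (\<exists>C. \<forall>x\<in>lp_space p. lp_norm p (T x) \<le> C * lp_norm p x)"

definition op_norm :: "ennreal \<Rightarrow> (('g \<Rightarrow> 'y::real_normed_vector) \<Rightarrow> ('g \<Rightarrow> 'y)) \<Rightarrow> real" where
  "op_norm p T = (SUP x\<in>{x\<in>lp_space p. lp_norm p x \<le> 1}. lp_norm p (T x))"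

definition op_diff :: "(('g \<Rightarrow> 'y::ab_group_add) \<Rightarrow> ('g \<Rightarrow> 'y)) \<Rightarrow> (('g \<Rightarrow> 'y) \<Rightarrow> ('g \<Rightarrow> 'y)) \<Rightarrow> ('g \<Rightarrow> 'y) \<Rightarrow> ('g \<Rightarrow> 'y)" where
  "op_diff S T = (\<lambda>x h. S x h - T x h)"

text \<open>P_n: multiplication by the indicator of G_n; I - P_n: multiplication by the indicator
of the complement.\<close>

definition proj :: "'g set \<Rightarrow> ('g \<Rightarrow> 'y::zero) \<Rightarrow> ('g \<Rightarrow> 'y)" where
  "proj S x = (\<lambda>h. if h \<in> S then x h else 0)"

definition coproj :: "'g set \<Rightarrow> ('g \<Rightarrow> 'y::zero) \<Rightarrow> ('g \<Rightarrow> 'y)" where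
  "coproj S x = (\<lambda>h. if h \<in> S then 0 else x h)"

definition admissible_seq :: "(nat \<Rightarrow> 'g set) \<Rightarrow> bool" where
  "admissible_seq Gs \<longleftrightarrow>
     (\<forall>n. Gs n \<noteq> {} \<and> Gs n \<noteq> UNIV) \<and>
     (\<forall>m. \<exists>N. \<forall>n\<ge>N. Gs m \<subseteq> Gs n) \<and>
     (\<Union>n. Gs n) = UNIV"

definition P_compact :: "ennreal \<Rightarrow> (nat \<Rightarrow> 'g set) \<Rightarrow> (('g \<Rightarrow> 'y::complex_banach) \<Rightarrow> ('g \<Rightarrow> 'y)) \<Rightarrow> bool" where
  "P_compact p Gs K \<longleftrightarrow> bounded_op p K \<and>
     (\<lambda>n. op_norm p (K \<circ> coproj (Gs n))) \<longlonglongrightarrow> 0 \<and>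
     (\<lambda>n. op_norm p (coproj (Gs n) \<circ> K)) \<longlonglongrightarrow> 0"

definition LP :: "ennreal \<Rightarrow> (nat \<Rightarrow> 'g set) \<Rightarrow> (('g \<Rightarrow> 'y::complex_banach) \<Rightarrow> ('g \<Rightarrow> 'y)) set" where
  "LP p Gs = {A. bounded_op p A \<and>
     (\<forall>K. P_compact p Gs K \<longrightarrow> P_compact p Gs (A \<circ> K) \<and> P_compact p Gs (K \<circ> A))}"

definition P_lim :: "ennreal \<Rightarrow> (nat \<Rightarrow> 'g set) \<Rightarrow> (nat \<Rightarrow> (('g \<Rightarrow> 'y::complex_banach) \<Rightarrow> ('g \<Rightarrow> 'y)))
                      \<Rightarrow> (('g \<Rightarrow> 'y) \<Rightarrow> ('g \<Rightarrow> 'y)) \<Rightarrow> bool" where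
  "P_lim p Gs As A \<longleftrightarrow>
     (\<forall>K. P_compact p Gs K \<longrightarrow>
        (\<lambda>n. op_norm p (K \<circ> op_diff (As n) A) + op_norm p (op_diff (As n) A \<circ> K)) \<longlonglongrightarrow> 0)"

definition shift :: "'g::group_add \<Rightarrow> ('g \<Rightarrow> 'y) \<Rightarrow> ('g \<Rightarrow> 'y)" where
  "shift g x = (\<lambda>h. x (h + g))"

definition tends_to_infinity :: "(nat \<Rightarrow> 'g) \<Rightarrow> bool" where
  "tends_to_infinity gs \<longleftrightarrow> (\<forall>F. finite F \<longrightarrow> (\<exists>N. \<forall>n\<ge>N. gs n \<notin> F))"

definition op_spectrum :: "ennreal \<Rightarrow> (nat \<Rightarrow> 'g::group_add set) \<Rightarrow> (('g \<Rightarrow> 'y::complex_banach) \<Rightarrow> ('g \<Rightarrow> 'y))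
                           \<Rightarrow> (('g \<Rightarrow> 'y) \<Rightarrow> ('g \<Rightarrow> 'y)) set" where
  "op_spectrum p Gs B = {C. C \<in> LP p Gs \<and> (\<exists>gs. tends_to_infinity gs \<and>
       P_lim p Gs (\<lambda>n. shift (gs n) \<circ> B \<circ> shift (- gs n)) C)}"

definition self_similar :: "ennreal \<Rightarrow> (nat \<Rightarrow> 'g::group_add set) \<Rightarrow> (('g \<Rightarrow> 'y::complex_banach) \<Rightarrow> ('g \<Rightarrow> 'y)) \<Rightarrow> bool" where
  "self_similar p Gs B \<longleftrightarrow> B \<in> op_spectrum p Gs B"

text \<open>\<Omega> is the (compact metric) space of type 'w; \<alpha> g is a homeomorphism of \<Omega>.\<close>

definition dynamical_system :: "('g::group_add \<Rightarrow> 'w::metric_space \<Rightarrow> 'w) \<Rightarrow> bool" where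
  "dynamical_system \<alpha> \<longleftrightarrow> compact (UNIV :: 'w set) \<and>
     (\<forall>g. \<exists>\<beta>. homeomorphism UNIV UNIV (\<alpha> g) \<beta>) \<and>
     (\<forall>g h. \<alpha> (g + h) = \<alpha> g \<circ> \<alpha> h)"

definition limit_set :: "('g \<Rightarrow> 'w::metric_space \<Rightarrow> 'w) \<Rightarrow> 'w \<Rightarrow> 'w set" where
  "limit_set \<alpha> \<omega> = {\<nu>. \<exists>gs. tends_to_infinity gs \<and> (\<lambda>n. \<alpha> (gs n) \<omega>) \<longlonglongrightarrow> \<nu>}"

definition pseudoergodic :: "('g \<Rightarrow> 'w::metric_space \<Rightarrow> 'w) \<Rightarrow> 'w \<Rightarrow> bool" where
  "pseudoergodic \<alpha> \<omega> \<longleftrightarrow> limit_set \<alpha> \<omega> = UNIV"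

definition operator_family ::
  "ennreal \<Rightarrow> (nat \<Rightarrow> 'g::group_add set) \<Rightarrow> ('g \<Rightarrow> 'w::metric_space \<Rightarrow> 'w)
     \<Rightarrow> ('w \<Rightarrow> (('g \<Rightarrow> 'y::complex_banach) \<Rightarrow> ('g \<Rightarrow> 'y))) \<Rightarrow> bool" where
  "operator_family p Gs \<alpha> A \<longleftrightarrow>
     (\<forall>\<omega>. A \<omega> \<in> LP p Gs) \<and>
     (\<forall>\<omega> g. A (\<alpha> g \<omega>) = shift g \<circ> A \<omega> \<circ> shift (- g)) \<and>
     (\<forall>\<omega>s \<omega>. \<omega>s \<longlonglongrightarrow> \<omega> \<longrightarrow> P_lim p Gs (\<lambda>n. A (\<omega>s n)) (A \<omega>))"

end

theory Submission
  imports Defs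
begin

lemma q_ge1: "1 \<le> (p::ennreal) \<Longrightarrow> p \<noteq> \<infinity> \<Longrightarrow> 1 \<le> enn2real p"
  using enn2real_mono[of 1 p] by (simp add: top.not_eq_extremum)

lemma powr_sum_bound:
  fixes a b :: real assumes "0 \<le> a" "0 \<le> b" "0 < q" "c \<le> a + b" "0 \<le> c"
  shows "c powr q \<le> 2 powr q * (a powr q + b powr q)"
proof -
  have "c \<le> 2 * max a b" using assms by linarith
  hence "c powr q \<le> (2 * max a b) powr q" using assms by (intro powr_mono2) auto
  also have "\<dots> = 2 powr q * max a b powr q" using assms by (simp add: powr_mult)
  also have "max a b powr q \<le> a powr q + b powr q"
    by (cases "a \<le> b") (auto simp: max_def)
  hence "2 powr q * max a b powr q \<le> 2 powr q * (a powr q + b powr q)" by simp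
  finally show ?thesis .
qed

lemma lp_add:
  fixes x y :: "'g \<Rightarrow> 'y::real_normed_vector"
  assumes p: "1 \<le> p" and x: "x \<in> lp_space p" and y: "y \<in> lp_space p"
  shows "(\<lambda>h. x h + y h) \<in> lp_space p"
proof (cases "p = \<infinity>")
  case True
  then obtain a b where "\<forall>g. norm (x g) \<le> a" "\<forall>g. norm (y g) \<le> b"
    using x y by (auto simp: lp_space_def bounded_iff)
  hence "\<forall>g. norm (norm (x g + y g)) \<le> a + b"
    by (smt (verit) norm_triangle_ineq real_norm_def norm_ge_zero)
  thus ?thesis using True by (auto simp: lp_space_def bounded_iff)
next
  case False
  define q where "q = enn2real p"
  have q: "0 < q" using q_ge1[OF p False] q_def by simp
  have sx: "(\<lambda>g. norm (x g) powr q) summable_on UNIV" and sy: "(\<lambda>g. norm (y g) powr q) summable_on UNIV"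
    using x y False by (auto simp: lp_space_def q_def)
  have "(\<lambda>g. 2 powr q * (norm (x g) powr q + norm (y g) powr q)) summable_on UNIV"
    by (intro summable_on_cmult_right summable_on_add sx sy)
  hence "(\<lambda>g. norm (x g + y g) powr q) summable_on UNIV"
    by (rule summable_on_comparison_test) (auto intro!: powr_sum_bound q norm_triangle_ineq)
  thus ?thesis using False by (auto simp: lp_space_def q_def)
qed

lemma lp_scaleC:
  fixes x :: "'g \<Rightarrow> 'y::complex_banach"
  assumes p: "1 \<le> p" and x: "x \<in> lp_space p"
  shows "(\<lambda>h. scaleC c (x h)) \<in> lp_space p"
proof (cases "p = \<infinity>")
  case True
  then obtain a where "\<forall>g. norm (x g) \<le> a"
    using x by (auto simp: lp_space_def bounded_iff)
  hence "\<forall>g. norm (norm (scaleC c (x g))) \<le> cmod c * a"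
    by (simp add: norm_scaleC mult_left_mono)
  thus ?thesis using True by (auto simp: lp_space_def bounded_iff)
next
  case False
  define q where "q = enn2real p"
  have sx: "(\<lambda>g. norm (x g) powr q) summable_on UNIV"
    using x False by (auto simp: lp_space_def q_def)
  have "(\<lambda>g. cmod c powr q * norm (x g) powr q) summable_on UNIV"
    by (intro summable_on_cmult_right sx)
  hence "(\<lambda>g. norm (scaleC c (x g)) powr q) summable_on UNIV"
    by (simp add: norm_scaleC powr_mult)
  thus ?thesis using False by (auto simp: lp_space_def q_def)
qed

lemma scaleC_minus1: "scaleC (-1) (v::'y::complex_banach) = - v"
  by (metis of_real_1 of_real_minus scaleC_of_real scaleR_minus1_left)

lemma lp_diff:
  fixes x y :: "'g \<Rightarrow> 'y::complex_banach"
  assumes p: "1 \<le> p" and x: "x \<in> lp_space p" and y: "y \<in> lp_space p"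
  shows "(\<lambda>h. x h - y h) \<in> lp_space p"
proof -
  have "(\<lambda>h. x h + (\<lambda>h. scaleC (-1) (y h)) h) \<in> lp_space p"
    by (rule lp_add[OF p x lp_scaleC[OF p y]])
  thus ?thesis by (simp add: scaleC_minus1)
qed

lemma lp_single:
  fixes v :: "'y::real_normed_vector"
  assumes p: "1 \<le> p"
  shows "(\<lambda>g. if g = h then v else 0) \<in> lp_space p \<and> lp_norm p (\<lambda>g. if g = h then v else 0) = norm v"
proof (cases "p = \<infinity>")
  case True
  have b: "bounded (range (\<lambda>g. norm (if g = h then v else 0)))"
    by (rule boundedI[where B="norm v"]) auto
  have "(SUP g. norm (if g = h then v else 0)) = norm v"
    by (rule cSup_eq_maximum) (auto split: if_splits)
  thus ?thesis using True b by (simp add: lp_space_def lp_norm_def)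
next
  case False
  define q where "q = enn2real p"
  have q: "0 < q" using q_ge1[OF p False] q_def by simp
  have e: "(\<lambda>g. norm (if g = h then v else 0) powr q) = (\<lambda>g. if g = h then norm v powr q else 0)"
    by auto
  have "infsum (\<lambda>g. if g = h then norm v powr q else 0) UNIV = infsum (\<lambda>g. if g = h then norm v powr q else 0) {h}"
    by (rule infsum_cong_neutral) auto
  also have "\<dots> = norm v powr q" by simp
  finally have i: "infsum (\<lambda>g. if g = h then norm v powr q else 0) UNIV = norm v powr q" .
  have s: "(\<lambda>g. if g = h then norm v powr q else 0) summable_on UNIV"
    by (rule summable_on_cong_neutral[where T="{h}", THEN iffD2]) auto
  have "(norm v powr q) powr (1/q) = norm v" using q by (simp add: powr_powr)
  thus ?thesis using False s i by (simp add: lp_space_def lp_norm_def e flip: q_def)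
qed

lemma lp_zero: "1 \<le> p \<Longrightarrow> (\<lambda>_::'g. 0::'y::real_normed_vector) \<in> lp_space p \<and> lp_norm p (\<lambda>_::'g. 0::'y) = 0"
  using lp_single[where p=p and v="0::'y" and h=undefined] by simp

lemma lp_point:
  fixes y :: "'g \<Rightarrow> 'y::real_normed_vector"
  assumes p: "1 \<le> p" and y: "y \<in> lp_space p"
  shows "norm (y h) \<le> lp_norm p y"
proof (cases "p = \<infinity>")
  case True
  have "bdd_above (range (\<lambda>g. norm (y g)))"
    using y True by (auto simp: lp_space_def intro: bounded_imp_bdd_above)
  thus ?thesis using True by (simp add: lp_norm_def) (rule cSUP_upper, auto)
next
  case False
  define q where "q = enn2real p"
  have q: "0 < q" using q_ge1[OF p False] q_def by simp
  have s: "(\<lambda>g. norm (y g) powr q) summable_on UNIV"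
    using y False by (auto simp: lp_space_def q_def)
  have "infsum (\<lambda>g. norm (y g) powr q) {h} \<le> infsum (\<lambda>g. norm (y g) powr q) UNIV"
    by (rule infsum_mono2) (auto intro: s)
  hence "norm (y h) powr q \<le> infsum (\<lambda>g. norm (y g) powr q) UNIV" by simp
  hence "(norm (y h) powr q) powr (1/q) \<le> (infsum (\<lambda>g. norm (y g) powr q) UNIV) powr (1/q)"
    using q by (intro powr_mono2) auto
  moreover have "(norm (y h) powr q) powr (1/q) = norm (y h)" using q by (simp add: powr_powr)
  ultimately show ?thesis using False by (simp add: lp_norm_def flip: q_def)
qed

lemma lp_norm_nonneg: "1 \<le> p \<Longrightarrow> y \<in> lp_space p \<Longrightarrow> 0 \<le> lp_norm p (y::'g \<Rightarrow> 'y::real_normed_vector)"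
  by (rule order_trans[OF norm_ge_zero lp_point])

lemma lp_norm_scale:
  fixes x :: "'g \<Rightarrow> 'y::complex_banach"
  assumes p: "1 \<le> p" and x: "x \<in> lp_space p"
  shows "lp_norm p (\<lambda>h. scaleC c (x h)) \<le> cmod c * lp_norm p x"
proof (cases "p = \<infinity>")
  case True
  have "bdd_above (range (\<lambda>g. norm (x g)))"
    using x True by (auto simp: lp_space_def intro: bounded_imp_bdd_above)
  hence "(SUP g. norm (scaleC c (x g))) \<le> cmod c * (SUP g. norm (x g))"
    by (intro cSUP_least) (auto simp: norm_scaleC intro!: mult_left_mono cSUP_upper)
  thus ?thesis using True by (simp add: lp_norm_def)
next
  case False
  define q where "q = enn2real p"
  have q: "0 < q" using q_ge1[OF p False] q_def by simp
  have "infsum (\<lambda>g. norm (scaleC c (x g)) powr q) UNIV = cmod c powr q * infsum (\<lambda>g. norm (x g) powr q) UNIV"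
    by (simp add: norm_scaleC powr_mult infsum_cmult_right')
  moreover have "0 \<le> infsum (\<lambda>g. norm (x g) powr q) UNIV" by (rule infsum_nonneg) auto
  ultimately have "(infsum (\<lambda>g. norm (scaleC c (x g)) powr q) UNIV) powr (1/q) = cmod c * (infsum (\<lambda>g. norm (x g) powr q) UNIV) powr (1/q)"
    using q by (simp add: powr_mult powr_powr)
  thus ?thesis using False by (simp add: lp_norm_def flip: q_def)
qed

lemma lp_norm_diff_bound:
  assumes p: "1 \<le> p"
  shows "\<exists>B. \<forall>u v :: 'g \<Rightarrow> 'y::complex_banach. u \<in> lp_space p \<longrightarrow> v \<in> lp_space p \<longrightarrow> lp_norm p u \<le> M \<longrightarrow> lp_norm p v \<le> M
     \<longrightarrow> lp_norm p (\<lambda>h. u h - v h) \<le> B"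
proof (cases "p = \<infinity>")
  case True
  show ?thesis
  proof (intro exI[of _ "M+M"] allI impI)
    fix u v :: "'g \<Rightarrow> 'y" assume u: "u \<in> lp_space p" and v: "v \<in> lp_space p"
      and Mu: "lp_norm p u \<le> M" and Mv: "lp_norm p v \<le> M"
    have "(SUP g. norm (u g - v g)) \<le> M + M"
    proof (intro cSUP_least)
      fix g
      have "norm (u g - v g) \<le> norm (u g) + norm (v g)" by (rule norm_triangle_ineq4)
      also have "\<dots> \<le> M + M" using lp_point[OF p u, of g] lp_point[OF p v, of g] Mu Mv by linarith
      finally show "norm (u g - v g) \<le> M + M" .
    qed auto
    thus "lp_norm p (\<lambda>h. u h - v h) \<le> M + M" using True by (simp add: lp_norm_def)
  qed
next
  case False
  define q where "q = enn2real p"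
  have q: "0 < q" using q_ge1[OF p False] q_def by simp
  show ?thesis
  proof (intro exI[of _ "(2 powr q * (M powr q + M powr q)) powr (1/q)"] allI impI)
    fix u v :: "'g \<Rightarrow> 'y" assume u: "u \<in> lp_space p" and v: "v \<in> lp_space p"
      and Mu: "lp_norm p u \<le> M" and Mv: "lp_norm p v \<le> M"
    have su: "(\<lambda>g. norm (u g) powr q) summable_on UNIV" and sv: "(\<lambda>g. norm (v g) powr q) summable_on UNIV"
      using u v False by (auto simp: lp_space_def q_def)
    have sd: "(\<lambda>g. norm (u g - v g) powr q) summable_on UNIV"
      using lp_diff[OF p u v] False by (auto simp: lp_space_def q_def)
    define Su where "Su = infsum (\<lambda>g. norm (u g) powr q) UNIV"
    define Sv where "Sv = infsum (\<lambda>g. norm (v g) powr q) UNIV"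
    have Su0: "0 \<le> Su" unfolding Su_def by (rule infsum_nonneg) auto
    have Sv0: "0 \<le> Sv" unfolding Sv_def by (rule infsum_nonneg) auto
    have "Su powr (1/q) \<le> M" using Mu False by (simp add: lp_norm_def Su_def flip: q_def)
    hence "(Su powr (1/q)) powr q \<le> M powr q" using q by (intro powr_mono2) auto
    hence SuM: "Su \<le> M powr q" using q Su0 by (simp add: powr_powr)
    have "Sv powr (1/q) \<le> M" using Mv False by (simp add: lp_norm_def Sv_def flip: q_def)
    hence "(Sv powr (1/q)) powr q \<le> M powr q" using q by (intro powr_mono2) auto
    hence SvM: "Sv \<le> M powr q" using q Sv0 by (simp add: powr_powr)
    have "infsum (\<lambda>g. norm (u g - v g) powr q) UNIV \<le> infsum (\<lambda>g. 2 powr q * (norm (u g) powr q + norm (v g) powr q)) UNIV"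
      by (rule infsum_mono[OF sd]) (auto intro!: summable_on_cmult_right summable_on_add su sv powr_sum_bound q norm_triangle_ineq4)
    also have "\<dots> = 2 powr q * (Su + Sv)"
      by (simp add: infsum_cmult_right' infsum_add su sv Su_def Sv_def)
    also have "\<dots> \<le> 2 powr q * (M powr q + M powr q)" using SuM SvM by simp
    finally have "(infsum (\<lambda>g. norm (u g - v g) powr q) UNIV) powr (1/q) \<le> (2 powr q * (M powr q + M powr q)) powr (1/q)"
      using q by (intro powr_mono2) (auto intro: infsum_nonneg)
    thus "lp_norm p (\<lambda>h. u h - v h) \<le> (2 powr q * (M powr q + M powr q)) powr (1/q)"
      using False by (simp add: lp_norm_def flip: q_def)
  qed
qed

lemma scaleC_zero: "scaleC c (0::'y::complex_banach) = 0"
proof -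
  have "scaleC c (0::'y) = scaleC c 0 + scaleC c 0" by (metis add_0 scaleC_add_right)
  thus ?thesis by simp
qed

definition Kop :: "ennreal \<Rightarrow> 'g \<Rightarrow> ('g \<Rightarrow> 'y::complex_banach) \<Rightarrow> ('g \<Rightarrow> 'y)" where
  "Kop p h x = (if x \<in> lp_space p then (\<lambda>g. if g = h then x h else 0) else (\<lambda>_. 0))"

lemma Kop_in: "1 \<le> p \<Longrightarrow> Kop p h x \<in> lp_space p"
  using lp_single[of p h "x h"] lp_zero[of p] by (auto simp: Kop_def)

lemma Kop_norm: "1 \<le> p \<Longrightarrow> x \<in> lp_space p \<Longrightarrow> lp_norm p (Kop p h x) = norm (x h)"
  using lp_single[of p h "x h"] by (auto simp: Kop_def)

lemma Kop_bounded: assumes p: "1 \<le> p" shows "bounded_op p (Kop p h :: ('g \<Rightarrow> 'y::complex_banach) \<Rightarrow> _)"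
  unfolding bounded_op_def
proof (intro conjI ballI allI impI)
  fix x :: "'g \<Rightarrow> 'y" assume "x \<in> lp_space p" show "Kop p h x \<in> lp_space p" by (rule Kop_in[OF p])
next
  fix x :: "'g \<Rightarrow> 'y" assume "x \<notin> lp_space p" thus "Kop p h x = (\<lambda>_. 0)" by (simp add: Kop_def)
next
  fix x y :: "'g \<Rightarrow> 'y" assume x: "x \<in> lp_space p" and y: "y \<in> lp_space p"
  thus "Kop p h (\<lambda>h. x h + y h) = (\<lambda>ha. Kop p h x ha + Kop p h y ha)"
    using lp_add[OF p x y] by (auto simp: Kop_def)
next
  fix x :: "'g \<Rightarrow> 'y" and c assume x: "x \<in> lp_space p"
  thus "Kop p h (\<lambda>h. scaleC c (x h)) = (\<lambda>ha. scaleC c (Kop p h x ha))"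
    using lp_scaleC[OF p x] by (auto simp: Kop_def scaleC_zero)
next
  show "\<exists>C. \<forall>x\<in>lp_space p. lp_norm p (Kop p h x) \<le> C * lp_norm p (x :: 'g \<Rightarrow> 'y)"
    by (rule exI[of _ 1]) (simp add: Kop_norm[OF p] lp_point[OF p])
qed

lemma op_norm_zero:
  assumes p: "1 \<le> p" and T: "\<forall>x\<in>lp_space p. T x = (\<lambda>_. 0)"
  shows "op_norm p (T :: ('g \<Rightarrow> 'y::complex_banach) \<Rightarrow> _) = 0"
proof -
  have "(\<lambda>_. 0) \<in> {x\<in>lp_space p. lp_norm p x \<le> 1}" using lp_zero[OF p] by auto
  hence "(\<lambda>x. lp_norm p (T x)) ` {x\<in>lp_space p. lp_norm p x \<le> 1} = {0}"
    using T lp_zero[OF p, where 'g='g and 'y='y] by auto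
  thus ?thesis by (simp add: op_norm_def)
qed

lemma eventually_in_Gs:
  assumes "admissible_seq Gs" shows "\<exists>N. \<forall>n\<ge>N. h \<in> Gs n"
proof -
  from assms have "h \<in> (\<Union>n. Gs n)" by (simp add: admissible_seq_def)
  then obtain m where "h \<in> Gs m" by blast
  moreover from assms have "\<exists>N. \<forall>n\<ge>N. Gs m \<subseteq> Gs n" by (simp add: admissible_seq_def)
  then obtain N where "\<forall>n\<ge>N. Gs m \<subseteq> Gs n" by blast
  ultimately show ?thesis by blast
qed

lemma Kop_compact:
  assumes p: "1 \<le> p" and G: "admissible_seq Gs"
  shows "P_compact p Gs (Kop p h :: ('g \<Rightarrow> 'y::complex_banach) \<Rightarrow> _)"
proof -
  obtain N where N: "\<forall>n\<ge>N. h \<in> Gs n" using eventually_in_Gs[OF G] by blast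
  have "\<forall>n\<ge>N. op_norm p ((Kop p h :: ('g \<Rightarrow> 'y) \<Rightarrow> _) \<circ> coproj (Gs n)) = 0"
    using N by (auto intro!: op_norm_zero[OF p] simp: Kop_def coproj_def fun_eq_iff)
  hence 1: "(\<lambda>n. op_norm p ((Kop p h :: ('g \<Rightarrow> 'y) \<Rightarrow> _) \<circ> coproj (Gs n))) \<longlonglongrightarrow> 0"
    by (intro tendsto_eventually) (auto simp: eventually_sequentially)
  have "\<forall>n\<ge>N. op_norm p (coproj (Gs n) \<circ> (Kop p h :: ('g \<Rightarrow> 'y) \<Rightarrow> _)) = 0"
    using N by (auto intro!: op_norm_zero[OF p] simp: Kop_def coproj_def fun_eq_iff)
  hence 2: "(\<lambda>n. op_norm p (coproj (Gs n) \<circ> (Kop p h :: ('g \<Rightarrow> 'y) \<Rightarrow> _))) \<longlonglongrightarrow> 0"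
    by (intro tendsto_eventually) (auto simp: eventually_sequentially)
  show ?thesis using 1 2 Kop_bounded[OF p] by (simp add: P_compact_def)
qed

lemma op_ball:
  fixes B C :: "('g \<Rightarrow> 'y::complex_banach) \<Rightarrow> ('g \<Rightarrow> 'y)"
  assumes p: "1 \<le> p" and B: "bounded_op p B"
  shows "\<exists>M. \<forall>x\<in>lp_space p. lp_norm p x \<le> 1 \<longrightarrow> lp_norm p (B x) \<le> M"
proof -
  obtain C where C: "\<forall>x\<in>lp_space p. lp_norm p (B x) \<le> C * lp_norm p x"
    using B by (auto simp: bounded_op_def)
  have "\<forall>x\<in>lp_space p. lp_norm p x \<le> 1 \<longrightarrow> lp_norm p (B x) \<le> \<bar>C\<bar>"
  proof (intro ballI impI)
    fix x :: "'g \<Rightarrow> 'y" assume x: "x \<in> lp_space p" and l: "lp_norm p x \<le> 1"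
    have l0: "0 \<le> lp_norm p x" by (rule lp_norm_nonneg[OF p x])
    have "C * lp_norm p x \<le> \<bar>C\<bar> * lp_norm p x" using l0 by (intro mult_right_mono) auto
    also have "\<dots> \<le> \<bar>C\<bar>" using l l0 by (simp add: mult_left_le)
    finally show "lp_norm p (B x) \<le> \<bar>C\<bar>" using C x by (meson order_trans)
  qed
  thus ?thesis by blast
qed

lemma diff_ball:
  fixes B C :: "('g \<Rightarrow> 'y::complex_banach) \<Rightarrow> ('g \<Rightarrow> 'y)"
  assumes p: "1 \<le> p" and B: "bounded_op p B" and C: "bounded_op p C"
  shows "\<exists>M. \<forall>x\<in>lp_space p. lp_norm p x \<le> 1 \<longrightarrow> op_diff B C x \<in> lp_space p \<and> lp_norm p (op_diff B C x) \<le> M"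
proof -
  obtain M1 where M1: "\<forall>x\<in>lp_space p. lp_norm p x \<le> 1 \<longrightarrow> lp_norm p (B x) \<le> M1" using op_ball[OF p B] by blast
  obtain M2 where M2: "\<forall>x\<in>lp_space p. lp_norm p x \<le> 1 \<longrightarrow> lp_norm p (C x) \<le> M2" using op_ball[OF p C] by blast
  obtain M where M: "\<forall>u v :: 'g \<Rightarrow> 'y. u \<in> lp_space p \<longrightarrow> v \<in> lp_space p \<longrightarrow> lp_norm p u \<le> max M1 M2 \<longrightarrow> lp_norm p v \<le> max M1 M2
     \<longrightarrow> lp_norm p (\<lambda>h. u h - v h) \<le> M" using lp_norm_diff_bound[OF p, of "max M1 M2"] by blast
  have Bi: "\<forall>x\<in>lp_space p. B x \<in> lp_space p" and Ci: "\<forall>x\<in>lp_space p. C x \<in> lp_space p"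
    using B C by (auto simp: bounded_op_def)
  have "\<forall>x\<in>lp_space p. lp_norm p x \<le> 1 \<longrightarrow> op_diff B C x \<in> lp_space p \<and> lp_norm p (op_diff B C x) \<le> M"
  proof (intro ballI impI conjI)
    fix x :: "'g \<Rightarrow> 'y" assume x: "x \<in> lp_space p" and l: "lp_norm p x \<le> 1"
    show "op_diff B C x \<in> lp_space p" unfolding op_diff_def using lp_diff[OF p] Bi Ci x by blast
    show "lp_norm p (op_diff B C x) \<le> M" unfolding op_diff_def
      using M Bi Ci x M1 M2 l by (meson max.coboundedI1 max.coboundedI2)
  qed
  thus ?thesis by blast
qed

lemma sup_ge:
  assumes p: "1 \<le> p" and T: "\<forall>x\<in>lp_space p. lp_norm p x \<le> 1 \<longrightarrow> T x \<in> lp_space p \<and> lp_norm p (T x) \<le> M"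
  shows "0 \<le> op_norm p (T :: ('g \<Rightarrow> 'y::complex_banach) \<Rightarrow> ('g \<Rightarrow> 'y)) \<and>
    (\<forall>x\<in>lp_space p. lp_norm p x \<le> 1 \<longrightarrow> lp_norm p (T x) \<le> op_norm p T)"
proof -
  have bdd: "bdd_above ((\<lambda>x. lp_norm p (T x)) ` {x\<in>lp_space p. lp_norm p x \<le> 1})"
    using T by (auto intro!: bdd_aboveI[where M=M])
  have up: "\<forall>x\<in>lp_space p. lp_norm p x \<le> 1 \<longrightarrow> lp_norm p (T x) \<le> op_norm p T"
    unfolding op_norm_def using bdd by (auto intro!: cSUP_upper)
  have z: "(\<lambda>_. 0) \<in> lp_space p" "lp_norm p (\<lambda>_::'g. 0::'y) = 0" using lp_zero[OF p] by auto
  have "0 \<le> lp_norm p (T (\<lambda>_. 0))" using T z by (auto intro: lp_norm_nonneg[OF p])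
  also have "\<dots> \<le> op_norm p T" using up z by auto
  finally show ?thesis using up by blast
qed

lemma KD_bound:
  fixes B C :: "('g \<Rightarrow> 'y::complex_banach) \<Rightarrow> ('g \<Rightarrow> 'y)"
  assumes p: "1 \<le> p" and B: "bounded_op p B" and C: "bounded_op p C"
  shows "\<exists>M. \<forall>x\<in>lp_space p. lp_norm p x \<le> 1 \<longrightarrow> (Kop p h \<circ> op_diff B C) x \<in> lp_space p \<and> lp_norm p ((Kop p h \<circ> op_diff B C) x) \<le> M"
proof -
  obtain M where M: "\<forall>x\<in>lp_space p. lp_norm p x \<le> 1 \<longrightarrow> op_diff B C x \<in> lp_space p \<and> lp_norm p (op_diff B C x) \<le> M"
    using diff_ball[OF p B C] by blast
  have "\<forall>x\<in>lp_space p. lp_norm p x \<le> 1 \<longrightarrow> (Kop p h \<circ> op_diff B C) x \<in> lp_space p \<and> lp_norm p ((Kop p h \<circ> op_diff B C) x) \<le> M"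
  proof (intro ballI impI conjI)
    fix x :: "'g \<Rightarrow> 'y" assume x: "x \<in> lp_space p" and l: "lp_norm p x \<le> 1"
    have d: "op_diff B C x \<in> lp_space p" "lp_norm p (op_diff B C x) \<le> M" using M x l by auto
    show "(Kop p h \<circ> op_diff B C) x \<in> lp_space p" by (simp add: Kop_in[OF p])
    have "lp_norm p ((Kop p h \<circ> op_diff B C) x) = norm (op_diff B C x h)" using Kop_norm[OF p d(1)] by simp
    also have "\<dots> \<le> lp_norm p (op_diff B C x)" by (rule lp_point[OF p d(1)])
    finally show "lp_norm p ((Kop p h \<circ> op_diff B C) x) \<le> M" using d(2) by linarith
  qed
  thus ?thesis by blast
qed

lemma DK_bound:
  fixes B C :: "('g \<Rightarrow> 'y::complex_banach) \<Rightarrow> ('g \<Rightarrow> 'y)"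
  assumes p: "1 \<le> p" and B: "bounded_op p B" and C: "bounded_op p C"
  shows "\<exists>M. \<forall>x\<in>lp_space p. lp_norm p x \<le> 1 \<longrightarrow> (op_diff B C \<circ> Kop p h) x \<in> lp_space p \<and> lp_norm p ((op_diff B C \<circ> Kop p h) x) \<le> M"
proof -
  obtain M where M: "\<forall>x\<in>lp_space p. lp_norm p x \<le> 1 \<longrightarrow> op_diff B C x \<in> lp_space p \<and> lp_norm p (op_diff B C x) \<le> M"
    using diff_ball[OF p B C] by blast
  have K1: "Kop p h x \<in> lp_space p" for x :: "'g \<Rightarrow> 'y" by (rule Kop_in[OF p])
  have K2: "lp_norm p (Kop p h x) \<le> 1" if x: "x \<in> lp_space p" and l: "lp_norm p x \<le> 1" for x :: "'g \<Rightarrow> 'y"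
    using Kop_norm[OF p x, of h] lp_point[OF p x, of h] l by linarith
  hence "\<forall>x\<in>lp_space p. lp_norm p x \<le> 1 \<longrightarrow> (op_diff B C \<circ> Kop p h) x \<in> lp_space p \<and> lp_norm p ((op_diff B C \<circ> Kop p h) x) \<le> M"
    using M K1 K2 by simp
  thus ?thesis by blast
qed

lemma P_lim_parts:
  fixes Bs :: "nat \<Rightarrow> ('g \<Rightarrow> 'y::complex_banach) \<Rightarrow> ('g \<Rightarrow> 'y)" and C
  assumes p: "1 \<le> p" and G: "admissible_seq Gs" and Bs: "\<forall>n. bounded_op p (Bs n)" and C: "bounded_op p C"
    and L: "P_lim p Gs Bs C"
    and x: "x \<in> lp_space p" and l: "lp_norm p x \<le> 1"
  shows "\<exists>s. s \<longlonglongrightarrow> 0 \<and> (\<forall>n. norm (Bs n x h - C x h) \<le> s n)"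
proof -
  define s where "s n = op_norm p (Kop p h \<circ> op_diff (Bs n) C) + op_norm p (op_diff (Bs n) C \<circ> Kop p h)" for n
  have "s \<longlonglongrightarrow> 0" using L Kop_compact[OF p G] unfolding P_lim_def s_def by blast
  moreover have "norm (Bs n x h - C x h) \<le> s n" for n
  proof -
    obtain M1 where M1: "\<forall>x\<in>lp_space p. lp_norm p x \<le> 1 \<longrightarrow> (Kop p h \<circ> op_diff (Bs n) C) x \<in> lp_space p \<and> lp_norm p ((Kop p h \<circ> op_diff (Bs n) C) x) \<le> M1"
      using KD_bound[OF p Bs[rule_format] C] by blast
    obtain M2 where M2: "\<forall>x\<in>lp_space p. lp_norm p x \<le> 1 \<longrightarrow> (op_diff (Bs n) C \<circ> Kop p h) x \<in> lp_space p \<and> lp_norm p ((op_diff (Bs n) C \<circ> Kop p h) x) \<le> M2"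
      using DK_bound[OF p Bs[rule_format] C] by blast
    note S1 = sup_ge[OF p M1] and S2 = sup_ge[OF p M2]
    have d: "op_diff (Bs n) C x \<in> lp_space p"
      using diff_ball[OF p Bs[rule_format] C] x l by blast
    have "norm (Bs n x h - C x h) = lp_norm p ((Kop p h \<circ> op_diff (Bs n) C) x)"
      using Kop_norm[OF p d, of h] by (simp add: op_diff_def)
    also have "\<dots> \<le> op_norm p (Kop p h \<circ> op_diff (Bs n) C)" using S1 x l by blast
    also have "\<dots> \<le> s n" using S2 by (simp add: s_def comp_def)
    finally show ?thesis .
  qed
  ultimately show ?thesis by blast
qed

lemma P_lim_unique:
  fixes Bs :: "nat \<Rightarrow> ('g \<Rightarrow> 'y::complex_banach) \<Rightarrow> ('g \<Rightarrow> 'y)" and C D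
  assumes p: "1 \<le> p" and G: "admissible_seq Gs" and Bs: "\<forall>n. bounded_op p (Bs n)"
    and C: "bounded_op p C" and D: "bounded_op p D"
    and LC: "P_lim p Gs Bs C" and LD: "P_lim p Gs Bs D"
  shows "C = D"
proof -
  have ball: "C x h = D x h" if x: "x \<in> lp_space p" and l: "lp_norm p x \<le> 1" for x h
  proof -
    obtain s1 where s1: "s1 \<longlonglongrightarrow> 0" "\<forall>n. norm (Bs n x h - C x h) \<le> s1 n"
      using P_lim_parts[OF p G Bs C LC x l] by blast
    obtain s2 where s2: "s2 \<longlonglongrightarrow> 0" "\<forall>n. norm (Bs n x h - D x h) \<le> s2 n"
      using P_lim_parts[OF p G Bs D LD x l] by blast
    have "(\<lambda>n. s1 n + s2 n) \<longlonglongrightarrow> 0 + 0" by (intro tendsto_add s1 s2)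
    moreover have "\<forall>n\<ge>0. norm (C x h - D x h) \<le> s1 n + s2 n"
    proof (intro allI impI)
      fix n
      have "norm (C x h - D x h) = norm ((Bs n x h - D x h) - (Bs n x h - C x h))" by (simp add: algebra_simps)
      also have "\<dots> \<le> norm (Bs n x h - D x h) + norm (Bs n x h - C x h)" by (rule norm_triangle_ineq4)
      finally show "norm (C x h - D x h) \<le> s1 n + s2 n" using s1(2) s2(2) by (smt (verit))
    qed
    ultimately have "norm (C x h - D x h) \<le> 0" by (intro LIMSEQ_le_const) auto
    thus ?thesis by simp
  qed
  show ?thesis
  proof (rule ext)
    fix x :: "'g \<Rightarrow> 'y"
    show "C x = D x"
    proof (cases "x \<in> lp_space p")
      case False thus ?thesis using C D by (simp add: bounded_op_def)
    next
      case True
      define c where "c = 1 / (lp_norm p x + 1)"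
      have n0: "0 \<le> lp_norm p x" by (rule lp_norm_nonneg[OF p True])
      have c0: "0 < c" using n0 by (simp add: c_def)
      define y where "y = (\<lambda>h. scaleC (complex_of_real c) (x h))"
      have y: "y \<in> lp_space p" unfolding y_def by (rule lp_scaleC[OF p True])
      have "lp_norm p y \<le> cmod (complex_of_real c) * lp_norm p x" unfolding y_def by (rule lp_norm_scale[OF p True])
      also have "\<dots> = c * lp_norm p x" using c0 by simp
      also have "\<dots> \<le> 1" using n0 by (simp add: c_def field_simps)
      finally have ly: "lp_norm p y \<le> 1" .
      have Cy: "C y = (\<lambda>h. scaleC (complex_of_real c) (C x h))" using C True by (simp add: bounded_op_def y_def)
      have Dy: "D y = (\<lambda>h. scaleC (complex_of_real c) (D x h))" using D True by (simp add: bounded_op_def y_def)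
      show ?thesis
      proof
        fix h
        have "scaleC (complex_of_real c) (C x h) = scaleC (complex_of_real c) (D x h)"
          using ball[OF y ly, of h] Cy Dy by metis
        hence "scaleC (inverse (complex_of_real c)) (scaleC (complex_of_real c) (C x h)) = scaleC (inverse (complex_of_real c)) (scaleC (complex_of_real c) (D x h))"
          by simp
        thus "C x h = D x h" using c0 by (simp add: scaleC_scaleC scaleC_one)
      qed
    qed
  qed
qed

lemma P_lim_subseq:
  fixes Bs :: "nat \<Rightarrow> ('g \<Rightarrow> 'y::complex_banach) \<Rightarrow> ('g \<Rightarrow> 'y)"
  assumes "strict_mono r" "P_lim p Gs Bs C"
  shows "P_lim p Gs (\<lambda>n. Bs (r n)) C"
  unfolding P_lim_def
proof (intro allI impI)
  fix K :: "('g \<Rightarrow> 'y) \<Rightarrow> ('g \<Rightarrow> 'y)" assume "P_compact p Gs K"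
  hence "(\<lambda>n. op_norm p (K \<circ> op_diff (Bs n) C) + op_norm p (op_diff (Bs n) C \<circ> K)) \<longlonglongrightarrow> 0"
    using assms(2) by (simp add: P_lim_def)
  from LIMSEQ_subseq_LIMSEQ[OF this assms(1)]
  show "(\<lambda>n. op_norm p (K \<circ> op_diff (Bs (r n)) C) + op_norm p (op_diff (Bs (r n)) C \<circ> K)) \<longlonglongrightarrow> 0"
    by (simp add: o_def)
qed

theorem corollary4p3:
  fixes p :: ennreal
    and Gs :: "nat \<Rightarrow> 'g::{group_add, countable} set"
    and \<alpha> :: "'g \<Rightarrow> 'w::metric_space \<Rightarrow> 'w"
    and A :: "'w \<Rightarrow> (('g \<Rightarrow> 'y::complex_banach) \<Rightarrow> ('g \<Rightarrow> 'y))"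
  assumes "1 \<le> p"
    and "admissible_seq Gs"
    and "dynamical_system \<alpha>"
    and "operator_family p Gs \<alpha> A"
  shows "\<forall>\<omega>. pseudoergodic \<alpha> \<omega> \<longrightarrow>
           op_spectrum p Gs (A \<omega>) = range A \<and> self_similar p Gs (A \<omega>)"
proof (intro allI impI)
  note p = assms(1) and G = assms(2)
  fix \<omega> assume pe: "pseudoergodic \<alpha> \<omega>"
  have LP: "\<And>\<omega>. A \<omega> \<in> LP p Gs" and eq: "\<And>\<omega> g. A (\<alpha> g \<omega>) = shift g \<circ> A \<omega> \<circ> shift (- g)"
    and cont: "\<And>\<omega>s \<omega>. \<omega>s \<longlonglongrightarrow> \<omega> \<Longrightarrow> P_lim p Gs (\<lambda>n. A (\<omega>s n)) (A \<omega>)"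
    using assms(4) by (auto simp: operator_family_def)
  have bnd: "\<And>\<omega>. bounded_op p (A \<omega>)" using LP by (simp add: LP_def)
  have cpt: "compact (UNIV :: 'w set)" using assms(3) by (simp add: dynamical_system_def)
  have sh: "(\<lambda>n. shift (gs n) \<circ> A \<omega> \<circ> shift (- gs n)) = (\<lambda>n. A (\<alpha> (gs n) \<omega>))" for gs
    by (simp add: eq)
  have eqs: "op_spectrum p Gs (A \<omega>) = range A"
  proof
    show "op_spectrum p Gs (A \<omega>) \<subseteq> range A"
    proof
      fix C assume "C \<in> op_spectrum p Gs (A \<omega>)"
      then obtain gs where C: "C \<in> LP p Gs" and L: "P_lim p Gs (\<lambda>n. A (\<alpha> (gs n) \<omega>)) C"
        by (auto simp: op_spectrum_def sh)
      obtain \<nu> r where r: "strict_mono r" and conv: "((\<lambda>n. \<alpha> (gs n) \<omega>) \<circ> r) \<longlonglongrightarrow> \<nu>"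
        using compact_imp_seq_compact[OF cpt] unfolding seq_compact_def by blast
      have L1: "P_lim p Gs (\<lambda>n. A (\<alpha> (gs (r n)) \<omega>)) C" using P_lim_subseq[OF r L] by simp
      have L2: "P_lim p Gs (\<lambda>n. A (\<alpha> (gs (r n)) \<omega>)) (A \<nu>)" using cont[OF conv] by (simp add: o_def)
      have "C = A \<nu>"
        by (rule P_lim_unique[OF p G _ _ bnd L1 L2]) (use bnd C in \<open>auto simp: LP_def\<close>)
      thus "C \<in> range A" by simp
    qed
  next
    show "range A \<subseteq> op_spectrum p Gs (A \<omega>)"
    proof
      fix C assume "C \<in> range A"
      then obtain \<nu> where C: "C = A \<nu>" by blast
      have "\<nu> \<in> limit_set \<alpha> \<omega>" using pe by (simp add: pseudoergodic_def)
      then obtain gs where gs: "tends_to_infinity gs" "(\<lambda>n. \<alpha> (gs n) \<omega>) \<longlonglongrightarrow> \<nu>"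
        by (auto simp: limit_set_def)
      show "C \<in> op_spectrum p Gs (A \<omega>)"
        unfolding op_spectrum_def C sh using LP gs cont[OF gs(2)] by blast
    qed
  qed
  show "op_spectrum p Gs (A \<omega>) = range A \<and> self_similar p Gs (A \<omega>)"
    using eqs by (simp add: self_similar_def)
qed

end
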